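(* Let $n\ge2$ and consider the general linear–quadratic game with dynamics $\mathbf x_{t+1}=\mathbf A_t\mathbf x_t+\mathbf B_t\mathbf u_t+\mathbf w_t$ and per-step costs $c^i_t(\mathbf x_t,\mathbf u_t)=\mathbf x_t^\top Q^i_t\mathbf x_t+\mathbf u_t^\top R^i_t\mathbf u_t$, $i\in\{1,\dots,n\}$, and suppose the players are exchangeable. Then there exist matrices $A_t,B_t,\bar A_t,\bar B_t$ such that, with $\bar x_t=\frac1n\sum_{j=1}^nx^j_t$ and $\bar u_t=\frac1n\sum_{j=1}^nu^j_t$, the dynamics of every player $i$ read $x^i_{t+1}=A_tx^i_t+B_tu^i_t+\bar A_t\bar x_t+\bar B_t\bar u_t+w^i_t$. Moreover, there exist matrices $Q_t,R_t,S^x_t,S^u_t,\bar Q_t,\bar R_t,G^x_t,G^u_t$ such that the cost of every player $i$ can be written as $c^i_t=(x^i_t)^\top Q_tx^i_t+2(x^i_t)^\top S^x_t\bar x_t+\bar x_t^\top\bar Q_t\bar x_t+(u^i_t)^\top R_tu^i_t+2(u^i_t)^\top S^u_t\bar u_t+\bar u_t^\top\bar R_t\bar u_t+\frac1n\sum_{j=1}^n\big((x^j_t)^\top G^x_tx^j_t+(u^j_t)^\top G^u_tu^j_t\big)$.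
   Context: Here $\mathbf x_t=(x^1_t,\dots,x^n_t)$ with $x^i_t\in\mathbb R^{d_x}$, $\mathbf u_t=(u^1_t,\dots,u^n_t)$ with $u^i_t\in\mathbb R^{d_u}$, $\mathbf w_t=(w^1_t,\dots,w^n_t)$ with $w^i_t\in\mathbb R^{d_x}$, and $\mathbf A_t,\mathbf B_t,Q^i_t,R^i_t$ are matrices of appropriate (block) sizes; write $\mathbf c_t=(c^1_t,\dots,c^n_t)$. For $i,j\in\{1,\dots,n\}$ let $\sigma_{i,j}$ denote the map swapping the $i$-th and $j$-th components of an $n$-component vector. The players are called exchangeable if for every pair $i,j$ and every $t$: whenever $\mathbf x_{t+1}=\mathbf A_t\mathbf x_t+\mathbf B_t\mathbf u_t+\mathbf w_t$, also $\sigma_{i,j}(\mathbf x_{t+1})=\mathbf A_t\sigma_{i,j}(\mathbf x_t)+\mathbf B_t\sigma_{i,j}(\mathbf u_t)+\sigma_{i,j}(\mathbf w_t)$; and $\sigma_{i,j}(\mathbf c_t(\mathbf x_t,\mathbf u_t))=\mathbf c_t(\sigma_{i,j}(\mathbf x_t),\sigma_{i,j}(\mathbf u_t))$ for all $\mathbf x_t,\mathbf u_t$. *)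

theory Defs
  imports "HOL-Analysis.Analysis"
begin

text \<open>Joint vectors of n players are functions from a finite player type 'p to the
  per-player component space. A block matrix of size (n*d1) x (n*d2) is represented by
  its blocks: M i j is the (i,j) block.\<close>

definition blk_apply :: "('p::finite \<Rightarrow> 'p \<Rightarrow> real^'b^'a) \<Rightarrow> ('p \<Rightarrow> real^'b) \<Rightarrow> ('p \<Rightarrow> real^'a)" where
  "blk_apply M X = (\<lambda>i. \<Sum>j\<in>UNIV. M i j *v X j)"

definition blk_quad :: "('p::finite \<Rightarrow> 'p \<Rightarrow> real^'a^'a) \<Rightarrow> ('p \<Rightarrow> real^'a) \<Rightarrow> real" where
  "blk_quad M X = (\<Sum>i\<in>UNIV. \<Sum>j\<in>UNIV. X i \<bullet> (M i j *v X j))"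

definition swapc :: "'p \<Rightarrow> 'p \<Rightarrow> ('p \<Rightarrow> 'v) \<Rightarrow> ('p \<Rightarrow> 'v)" where
  "swapc i j X = (\<lambda>k. X (if k = i then j else if k = j then i else k))"

definition mean :: "('p::finite \<Rightarrow> real^'a) \<Rightarrow> real^'a" where
  "mean X = (1 / real CARD('p)) *\<^sub>R (\<Sum>j\<in>UNIV. X j)"

end

theory Submission
  imports Defs
begin

lemma trans_dot: "x \<bullet> (transpose M *v y) = y \<bullet> ((M::real^'a::finite^'b::finite) *v x)"
  unfolding inner_vec_def matrix_vector_mult_def transpose_def
  apply (simp add: sum_distrib_left sum_distrib_right mult_ac)
  by (rule sum.swap)

lemma sum2: "(l::'p::finite) \<noteq> m \<Longrightarrow> (\<Sum>i\<in>UNIV. if i = l then f i else if i = m then g i else (0::'b::comm_monoid_add)) = f l + g m"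
proof -
  assume "l \<noteq> m"
  then have "\<And>i. (if i = l then f i else if i = m then g i else 0) = (if i = l then f i else 0) + (if i = m then g i else 0)" by auto
  then show ?thesis by (simp add: sum.distrib)
qed

lemma bq2: assumes "l \<noteq> m"
  shows "blk_quad M (\<lambda>k. if k = l then v else if k = m then w else 0)
   = v\<bullet>(M l l *v v) + v\<bullet>(M l m *v w) + w\<bullet>(M m l *v v) + w\<bullet>(M m m *v w)"
proof -
  let ?X = "\<lambda>k::'a. if k = l then v else if k = m then w else 0"
  have "\<And>i j. ?X i \<bullet> (M i j *v ?X j) = (if i = l then (if j = l then v\<bullet>(M l l *v v) else if j = m then v\<bullet>(M l m *v w) else 0)
     else if i = m then (if j = l then w\<bullet>(M m l *v v) else if j = m then w\<bullet>(M m m *v w) else 0) else 0)"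
    using assms by auto
  then have "blk_quad M ?X = (\<Sum>i\<in>UNIV. if i = l then (\<Sum>j\<in>UNIV. if j = l then v\<bullet>(M l l *v v) else if j = m then v\<bullet>(M l m *v w) else 0)
     else if i = m then (\<Sum>j\<in>UNIV. if j = l then w\<bullet>(M m l *v v) else if j = m then w\<bullet>(M m m *v w) else 0) else 0)"
    unfolding blk_quad_def by (intro sum.cong) auto
  then show ?thesis using assms by (simp add: sum2)
qed

lemma bq1: "blk_quad M (\<lambda>k. if k = l then v else 0) = v\<bullet>(M l l *v v)"
proof -
  have "\<And>i j. (\<lambda>k. if k = l then v else 0) i \<bullet> (M i j *v (\<lambda>k. if k = l then v else 0) j) = (if i = l then (if j = l then v\<bullet>(M l l *v v) else 0) else 0)"
    by auto
  then have "blk_quad M (\<lambda>k. if k = l then v else 0) = (\<Sum>i\<in>UNIV. if i = l then (\<Sum>j\<in>UNIV. if j = l then v\<bullet>(M l l *v v) else 0) else 0)"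
    unfolding blk_quad_def by (intro sum.cong) auto
  then show ?thesis by simp
qed
lemma quad_facts:
  fixes M :: "'p::finite \<Rightarrow> 'p \<Rightarrow> real^'a::finite^'a" and a b :: 'p
  assumes inv: "\<And>x y Y. x \<noteq> a \<Longrightarrow> y \<noteq> a \<Longrightarrow> blk_quad M (swapc x y Y) = blk_quad M Y"
    and ba: "b \<noteq> a"
  shows "\<And>l (w::real^'a). l \<noteq> a \<Longrightarrow> w \<bullet> (M l l *v w) = w \<bullet> (M b b *v w)"
    and "\<And>m v w. m \<noteq> a \<Longrightarrow> v \<bullet> (M a m *v w) + w \<bullet> (M m a *v v) = v \<bullet> ((M a b + transpose (M b a)) *v w)"
    and "\<exists>H. \<forall>l m v w. l \<noteq> a \<longrightarrow> m \<noteq> a \<longrightarrow> l \<noteq> m \<longrightarrow> v \<bullet> (M l m *v w) + w \<bullet> (M m l *v v) = v \<bullet> (H *v w)"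
proof -
  show diag: "\<And>l (w::real^'a). l \<noteq> a \<Longrightarrow> w \<bullet> (M l l *v w) = w \<bullet> (M b b *v w)"
  proof -
    fix l and w :: "real^'a" assume la: "l \<noteq> a"
    have "swapc l b (\<lambda>k. if k = l then w else 0) = (\<lambda>k. if k = b then w else 0)"
      unfolding swapc_def by auto
    then have "blk_quad M (\<lambda>k. if k = b then w else 0) = blk_quad M (\<lambda>k. if k = l then w else 0)"
      using inv[OF la ba, of "\<lambda>k. if k = l then w else 0"] by simp
    then show "w \<bullet> (M l l *v w) = w \<bullet> (M b b *v w)" by (simp add: bq1)
  qed
  show "\<And>m v w. m \<noteq> a \<Longrightarrow> v \<bullet> (M a m *v w) + w \<bullet> (M m a *v v) = v \<bullet> ((M a b + transpose (M b a)) *v w)"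
  proof -
    fix m and v w :: "real^'a" assume ma: "m \<noteq> a"
    have "swapc m b (\<lambda>k. if k = a then v else if k = m then w else 0) = (\<lambda>k. if k = a then v else if k = b then w else 0)"
      unfolding swapc_def using ma ba by auto
    then have "blk_quad M (\<lambda>k. if k = a then v else if k = b then w else 0) = blk_quad M (\<lambda>k. if k = a then v else if k = m then w else 0)"
      using inv[OF ma ba, of "\<lambda>k. if k = a then v else if k = m then w else 0"] by simp
    then have "v \<bullet> (M a b *v w) + w \<bullet> (M b a *v v) = v \<bullet> (M a m *v w) + w \<bullet> (M m a *v v)"
      using bq2[OF not_sym[OF ma], of M v w] bq2[OF not_sym[OF ba], of M v w] diag[OF ma, of w] by simp
    then show "v \<bullet> (M a m *v w) + w \<bullet> (M m a *v v) = v \<bullet> ((M a b + transpose (M b a)) *v w)"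
      by (simp only: matrix_vector_mult_add_rdistrib inner_add_right trans_dot)
  qed
  show "\<exists>H. \<forall>l m v w. l \<noteq> a \<longrightarrow> m \<noteq> a \<longrightarrow> l \<noteq> m \<longrightarrow> v \<bullet> (M l m *v w) + w \<bullet> (M m l *v v) = v \<bullet> (H *v w)"
  proof (cases "\<exists>c. c \<noteq> a \<and> c \<noteq> b")
    case False
    then show ?thesis by auto
  next
    case True
    then obtain c where ca: "c \<noteq> a" and cb: "c \<noteq> b" by blast
    show ?thesis
    proof (intro exI allI impI)
      fix l m and v w :: "real^'a" assume la: "l \<noteq> a" and ma: "m \<noteq> a" and lm: "l \<noteq> m"
      define m1 where "m1 = (if m = l then b else if m = b then l else m)"
      have m1a: "m1 \<noteq> a" using ma ba la unfolding m1_def by auto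
      have m1b: "m1 \<noteq> b" using lm unfolding m1_def by auto
      have e1: "swapc l b (\<lambda>k. if k = l then v else if k = m then w else 0) = (\<lambda>k. if k = b then v else if k = m1 then w else 0)"
        unfolding swapc_def m1_def using lm by (auto intro!: ext)
      have e2: "swapc m1 c (\<lambda>k. if k = b then v else if k = m1 then w else 0) = (\<lambda>k. if k = b then v else if k = c then w else 0)"
        unfolding swapc_def using m1b cb by (auto intro!: ext)
      have "blk_quad M (\<lambda>k. if k = b then v else if k = c then w else 0) = blk_quad M (\<lambda>k. if k = l then v else if k = m then w else 0)"
        using inv[OF m1a ca, of "\<lambda>k. if k = b then v else if k = m1 then w else 0"] inv[OF la ba, of "\<lambda>k. if k = l then v else if k = m then w else 0"] e1 e2 by simp
      then show "v \<bullet> (M l m *v w) + w \<bullet> (M m l *v v) = v \<bullet> ((M b c + transpose (M c b)) *v w)"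
        using lm cb[symmetric] diag[OF la, of v] diag[OF ma, of w] diag[OF ca, of w]
        unfolding matrix_vector_mult_add_rdistrib inner_add_right trans_dot by (simp add: bq2)
    qed
  qed
qed

lemma vm_dot: "x \<bullet> (y v* M) = y \<bullet> ((M::real^'a::finite^'b::finite) *v x)"
  using trans_dot[of x M y] by simp

lemma ex_other: assumes "CARD('p::finite) \<ge> 2" shows "\<exists>b::'p. b \<noteq> a"
proof (rule ccontr)
  assume "\<not> (\<exists>b::'p. b \<noteq> a)"
  then have "(UNIV::'p set) = {a}" by auto
  then have "CARD('p) = card {a}" by (rule arg_cong)
  then have "CARD('p) = 1" by simp
  then show False using assms by simp
qed

lemma quad_struct:
  fixes M :: "'p::finite \<Rightarrow> 'p \<Rightarrow> real^'a::finite^'a" and a :: 'p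
  assumes inv: "\<And>x y Y. x \<noteq> a \<Longrightarrow> y \<noteq> a \<Longrightarrow> blk_quad M (swapc x y Y) = blk_quad M Y"
    and n2: "CARD('p) \<ge> 2"
  shows "\<exists>(Q::real^'a^'a) (Sx::real^'a^'a) (Qbar::real^'a^'a) (Gx::real^'a^'a). \<forall>Y. blk_quad M Y =
     Y a \<bullet> (Q *v Y a) + 2 * (Y a \<bullet> (Sx *v mean Y)) + mean Y \<bullet> (Qbar *v mean Y)
     + (1 / real CARD('p)) * (\<Sum>j\<in>UNIV. Y j \<bullet> (Gx *v Y j))"
proof -
  obtain b where ba: "b \<noteq> a" using ex_other[OF n2] by blast
  define P where "P = M a b + transpose (M b a)"
  define G where "G = M b b"
  note facts = quad_facts[OF inv ba]
  obtain H where H: "\<And>l m v w. l \<noteq> a \<Longrightarrow> m \<noteq> a \<Longrightarrow> l \<noteq> m \<Longrightarrow> v \<bullet> (M l m *v w) + w \<bullet> (M m l *v v) = v \<bullet> (H *v w)"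
    using facts(3) by blast
  have diag: "\<And>l w. l \<noteq> a \<Longrightarrow> w \<bullet> (M l l *v w) = w \<bullet> (G *v w)" using facts(1) G_def by blast
  have Pf: "\<And>m v w. m \<noteq> a \<Longrightarrow> v \<bullet> (M a m *v w) + w \<bullet> (M m a *v v) = v \<bullet> (P *v w)" using facts(2) P_def by blast
  define n where "n = real CARD('p)"
  have npos: "n > 0" unfolding n_def by simp
  define K where "K = G - (1/2) *\<^sub>R H"
  define Q where "Q = M a a - P + (1/2) *\<^sub>R H - K"
  define Sx where "Sx = (n/2) *\<^sub>R (P - (1/2) *\<^sub>R (H + transpose H))"
  define Qbar where "Qbar = (n^2/2) *\<^sub>R H"
  define Gx where "Gx = n *\<^sub>R K"
  show ?thesis
  proof (intro exI allI)
    fix Y :: "'p \<Rightarrow> real^'a"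
    define A where "A = UNIV - {a}"
    define f where "f = (\<lambda>l m. Y l \<bullet> (M l m *v Y m))"
    define S where "S = (\<Sum>j\<in>UNIV. Y j)"
    define S' where "S' = (\<Sum>j\<in>A. Y j)"
    have rem: "\<And>g::'p \<Rightarrow> 'b::comm_monoid_add. sum g UNIV = g a + sum g A"
      unfolding A_def by (simp add: sum.remove[of UNIV a])
    have finA: "finite A" by simp
    have e1: "blk_quad M Y = f a a + (\<Sum>m\<in>A. f a m + f m a) + (\<Sum>l\<in>A. \<Sum>m\<in>A. f l m)"
    proof -
      have "blk_quad M Y = (\<Sum>l\<in>UNIV. \<Sum>m\<in>UNIV. f l m)" unfolding blk_quad_def f_def by simp
      also have "\<dots> = (\<Sum>l\<in>UNIV. f l a + (\<Sum>m\<in>A. f l m))" by (simp add: rem[of "f _"])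
      also have "\<dots> = (\<Sum>l\<in>UNIV. f l a) + (\<Sum>l\<in>UNIV. \<Sum>m\<in>A. f l m)" by (simp add: sum.distrib)
      also have "\<dots> = (f a a + (\<Sum>l\<in>A. f l a)) + ((\<Sum>m\<in>A. f a m) + (\<Sum>l\<in>A. \<Sum>m\<in>A. f l m))"
        using rem[of "\<lambda>l. f l a"] rem[of "\<lambda>l. \<Sum>m\<in>A. f l m"] by simp
      finally show ?thesis by (simp add: sum.distrib algebra_simps)
    qed
    have e2: "(\<Sum>m\<in>A. f a m + f m a) = Y a \<bullet> (P *v S')"
    proof -
      have "(\<Sum>m\<in>A. f a m + f m a) = (\<Sum>m\<in>A. Y a \<bullet> (P *v Y m))"
        using Pf unfolding f_def A_def by (intro sum.cong) auto
      then show ?thesis unfolding S'_def by (simp add: inner_sum_right vec.sum)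
    qed
    have e3: "2 * (\<Sum>l\<in>A. \<Sum>m\<in>A. f l m) = S' \<bullet> (H *v S') + 2 * (\<Sum>l\<in>A. Y l \<bullet> (K *v Y l))"
    proof -
      have sw: "(\<Sum>l\<in>A. \<Sum>m\<in>A. f l m) = (\<Sum>l\<in>A. \<Sum>m\<in>A. f m l)" by (rule sum.swap)
      have pair: "\<And>l m. l \<in> A \<Longrightarrow> m \<in> A \<Longrightarrow> f l m + f m l = Y l \<bullet> (H *v Y m) + (if l = m then 2 * (Y l \<bullet> (K *v Y l)) else 0)"
      proof -
        fix l m assume l: "l \<in> A" and m: "m \<in> A"
        show "f l m + f m l = Y l \<bullet> (H *v Y m) + (if l = m then 2 * (Y l \<bullet> (K *v Y l)) else 0)"
        proof (cases "l = m")
          case True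
          then show ?thesis using diag[of l "Y l"] l unfolding f_def K_def A_def
            by (simp add: matrix_vector_mult_diff_rdistrib inner_diff_right scaleR_matrix_vector_assoc[symmetric])
        next
          case False
          then show ?thesis using H[of l m "Y l" "Y m"] l m unfolding f_def A_def by simp
        qed
      qed
      have "2 * (\<Sum>l\<in>A. \<Sum>m\<in>A. f l m) = (\<Sum>l\<in>A. \<Sum>m\<in>A. f l m + f m l)"
        using sw by (simp add: sum.distrib)
      also have "\<dots> = (\<Sum>l\<in>A. \<Sum>m\<in>A. Y l \<bullet> (H *v Y m) + (if l = m then 2 * (Y l \<bullet> (K *v Y l)) else 0))"
        using pair by (intro sum.cong) auto
      also have "\<dots> = (\<Sum>l\<in>A. \<Sum>m\<in>A. Y l \<bullet> (H *v Y m)) + (\<Sum>l\<in>A. 2 * (Y l \<bullet> (K *v Y l)))"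
        by (simp add: sum.distrib finA)
      also have "\<dots> = S' \<bullet> (H *v S') + 2 * (\<Sum>l\<in>A. Y l \<bullet> (K *v Y l))"
        unfolding S'_def apply (simp add: inner_sum_right inner_sum_left vec.sum sum_distrib_left)
        by (rule sum.swap)
      finally show ?thesis .
    qed
    have fa: "f a a = Y a \<bullet> (M a a *v Y a)" unfolding f_def by simp
    have SS: "S' = S - Y a" unfolding S'_def S_def using rem[of Y] by simp
    have KK: "(\<Sum>l\<in>A. Y l \<bullet> (K *v Y l)) = (\<Sum>l\<in>UNIV. Y l \<bullet> (K *v Y l)) - Y a \<bullet> (K *v Y a)"
      using rem[of "\<lambda>l. Y l \<bullet> (K *v Y l)"] by simp
    have main: "blk_quad M Y = Y a \<bullet> (M a a *v Y a) + Y a \<bullet> (P *v (S - Y a)) + (1/2) * ((S - Y a) \<bullet> (H *v (S - Y a)))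
        + (\<Sum>l\<in>UNIV. Y l \<bullet> (K *v Y l)) - Y a \<bullet> (K *v Y a)"
      using e1 e2 e3 fa SS KK by simp
    have mY: "mean Y = (1/n) *\<^sub>R S" unfolding mean_def S_def n_def by simp
    show "blk_quad M Y = Y a \<bullet> (Q *v Y a) + 2 * (Y a \<bullet> (Sx *v mean Y)) + mean Y \<bullet> (Qbar *v mean Y)
     + (1 / real CARD('p)) * (\<Sum>j\<in>UNIV. Y j \<bullet> (Gx *v Y j))"
      unfolding main mY n_def[symmetric] Q_def Sx_def Qbar_def Gx_def
      using npos
      by (simp add: matrix_vector_mult_add_rdistrib matrix_vector_mult_diff_rdistrib
          matrix_vector_right_distrib matrix_vector_mult_diff_distrib
          scaleR_matrix_vector_assoc[symmetric] matrix_vector_mult_scaleR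
          inner_add_left inner_add_right inner_diff_left inner_diff_right trans_dot vm_dot
          sum_distrib_left power2_eq_square field_simps)
  qed
qed

lemma sum_tr: "(\<Sum>j\<in>UNIV. g (if j = x then y else if j = y then x else j)) = (\<Sum>j\<in>(UNIV::'p::finite set). (g j::'b::comm_monoid_add))"
  by (rule sum.reindex_bij_witness[of _ "\<lambda>j. if j = x then y else if j = y then x else j" "\<lambda>j. if j = x then y else if j = y then x else j"]) auto

lemma sum_swapc: "(\<Sum>j\<in>UNIV. h (swapc x y F j)) = (\<Sum>j\<in>(UNIV::'p::finite set). (h (F j)::'b::comm_monoid_add))"
  unfolding swapc_def using sum_tr[of "\<lambda>j. h (F j)" x y] by simp

lemma mean_swapc: "mean (swapc x y F) = mean F"
  unfolding mean_def using sum_swapc[of "\<lambda>v. v" x y F] by simp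

lemma swapc_at: "swapc a i F a = F i" unfolding swapc_def by simp
lemma swapc_fix: "x \<noteq> a \<Longrightarrow> y \<noteq> a \<Longrightarrow> swapc x y F a = F a" unfolding swapc_def by simp
lemma swapc_zero: "swapc x y (\<lambda>_. 0) = (\<lambda>_. 0)" unfolding swapc_def by simp
lemma blk_apply_zero: "blk_apply M (\<lambda>_. 0) = (\<lambda>_. 0)" unfolding blk_apply_def by simp
lemma blk_quad_zero: "blk_quad M (\<lambda>_. 0) = 0" unfolding blk_quad_def by simp

lemma lin_struct:
  fixes M :: "'p::finite \<Rightarrow> 'p \<Rightarrow> real^'b::finite^'a::finite" and a :: 'p
  assumes inv: "\<And>x y Y. x \<noteq> a \<Longrightarrow> y \<noteq> a \<Longrightarrow> blk_apply M (swapc x y Y) a = blk_apply M Y a"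
    and n2: "CARD('p) \<ge> 2"
  shows "\<exists>(A::real^'b^'a) (Abar::real^'b^'a). \<forall>Y. blk_apply M Y a = A *v Y a + Abar *v mean Y"
proof -
  obtain b where ba: "b \<noteq> a" using ex_other[OF n2] by blast
  have E: "\<And>m v. blk_apply M (\<lambda>k. if k = m then v else 0) a = M a m *v v"
  proof -
    fix m and v :: "real^'b"
    have "blk_apply M (\<lambda>k. if k = m then v else 0) a = (\<Sum>j\<in>UNIV. if j = m then M a m *v v else 0)"
      unfolding blk_apply_def by (intro sum.cong) auto
    then show "blk_apply M (\<lambda>k. if k = m then v else 0) a = M a m *v v" by simp
  qed
  have const: "\<And>m v. m \<noteq> a \<Longrightarrow> M a m *v v = M a b *v v"
  proof -
    fix m and v :: "real^'b" assume ma: "m \<noteq> a"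
    have "swapc m b (\<lambda>k. if k = m then v else 0) = (\<lambda>k. if k = b then v else 0)"
      unfolding swapc_def by auto
    then show "M a m *v v = M a b *v v"
      using inv[OF ma ba, of "\<lambda>k. if k = m then v else 0"] E by simp
  qed
  define n where "n = real CARD('p)"
  have npos: "n > 0" unfolding n_def by simp
  show ?thesis
  proof (intro exI allI)
    fix Y :: "'p \<Rightarrow> real^'b"
    define A where "A = UNIV - {a}"
    have rem: "\<And>g::'p \<Rightarrow> 'c::comm_monoid_add. sum g UNIV = g a + sum g A"
      unfolding A_def by (simp add: sum.remove[of UNIV a])
    have "blk_apply M Y a = M a a *v Y a + (\<Sum>j\<in>A. M a j *v Y j)"
      unfolding blk_apply_def using rem by simp
    also have "(\<Sum>j\<in>A. M a j *v Y j) = (\<Sum>j\<in>A. M a b *v Y j)"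
      using const unfolding A_def by (intro sum.cong) auto
    also have "\<dots> = M a b *v ((\<Sum>j\<in>UNIV. Y j) - Y a)"
      using rem[of Y] by (simp add: vec.sum)
    finally have main: "blk_apply M Y a = M a a *v Y a + M a b *v ((\<Sum>j\<in>UNIV. Y j) - Y a)" .
    show "blk_apply M Y a = (M a a - M a b) *v Y a + (n *\<^sub>R M a b) *v mean Y"
      unfolding main mean_def n_def[symmetric] using npos
      by (simp add: matrix_vector_mult_diff_rdistrib matrix_vector_mult_diff_distrib
          scaleR_matrix_vector_assoc[symmetric] matrix_vector_mult_scaleR)
  qed
qed

theorem proposition1:
  fixes AA :: "nat \<Rightarrow> 'p::finite \<Rightarrow> 'p \<Rightarrow> real^'x::finite^'x"
    and BB :: "nat \<Rightarrow> 'p \<Rightarrow> 'p \<Rightarrow> real^'u::finite^'x"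
    and QQ :: "nat \<Rightarrow> 'p \<Rightarrow> 'p \<Rightarrow> 'p \<Rightarrow> real^'x^'x"
    and RR :: "nat \<Rightarrow> 'p \<Rightarrow> 'p \<Rightarrow> 'p \<Rightarrow> real^'u^'u"
  defines "dyn \<equiv> (\<lambda>t X U W i. blk_apply (AA t) X i + blk_apply (BB t) U i + W i)"
    and "c \<equiv> (\<lambda>t X U i. blk_quad (QQ t i) X + blk_quad (RR t i) U)"
  assumes n2: "CARD('p) \<ge> 2"
    and exch_dyn: "\<And>i j t X U W X'.
        X' = dyn t X U W \<Longrightarrow>
        swapc i j X' = dyn t (swapc i j X) (swapc i j U) (swapc i j W)"
    and exch_cost: "\<And>i j t X U. swapc i j (c t X U) = c t (swapc i j X) (swapc i j U)"
  shows "\<forall>t. (\<exists>(A::real^'x^'x) (B::real^'u^'x) (Abar::real^'x^'x) (Bbar::real^'u^'x).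
             \<forall>X U W i. dyn t X U W i =
                 A *v X i + B *v U i + Abar *v mean X + Bbar *v mean U + W i)
          \<and> (\<exists>(Q::real^'x^'x) (R::real^'u^'u) (Sx::real^'x^'x) (Su::real^'u^'u)
               (Qbar::real^'x^'x) (Rbar::real^'u^'u) (Gx::real^'x^'x) (Gu::real^'u^'u).
             \<forall>X U i. c t X U i =
                 X i \<bullet> (Q *v X i) + 2 * (X i \<bullet> (Sx *v mean X)) + mean X \<bullet> (Qbar *v mean X)
               + U i \<bullet> (R *v U i) + 2 * (U i \<bullet> (Su *v mean U)) + mean U \<bullet> (Rbar *v mean U)
               + (1 / real CARD('p)) * (\<Sum>j\<in>UNIV. X j \<bullet> (Gx *v X j) + U j \<bullet> (Gu *v U j)))"
proof
  fix t
  define a where "a = (undefined::'p)"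
  have dsw: "\<And>X U W x y. swapc x y (dyn t X U W) = dyn t (swapc x y X) (swapc x y U) (swapc x y W)"
    using exch_dyn by blast
  have invA: "\<And>x y X. x \<noteq> a \<Longrightarrow> y \<noteq> a \<Longrightarrow> blk_apply (AA t) (swapc x y X) a = blk_apply (AA t) X a"
  proof -
    fix x y and X :: "'p \<Rightarrow> real^'x" assume xa: "x \<noteq> a" and ya: "y \<noteq> a"
    have "swapc x y (dyn t X (\<lambda>_. 0) (\<lambda>_. 0)) a = dyn t (swapc x y X) (swapc x y (\<lambda>_. 0)) (swapc x y (\<lambda>_. 0)) a"
      using dsw by metis
    then show "blk_apply (AA t) (swapc x y X) a = blk_apply (AA t) X a"
      unfolding swapc_fix[OF xa ya] swapc_zero unfolding dyn_def by (simp add: blk_apply_zero)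
  qed
  have invB: "\<And>x y U. x \<noteq> a \<Longrightarrow> y \<noteq> a \<Longrightarrow> blk_apply (BB t) (swapc x y U) a = blk_apply (BB t) U a"
  proof -
    fix x y and U :: "'p \<Rightarrow> real^'u" assume xa: "x \<noteq> a" and ya: "y \<noteq> a"
    have "swapc x y (dyn t (\<lambda>_. 0) U (\<lambda>_. 0)) a = dyn t (swapc x y (\<lambda>_. 0)) (swapc x y U) (swapc x y (\<lambda>_. 0)) a"
      using dsw by metis
    then show "blk_apply (BB t) (swapc x y U) a = blk_apply (BB t) U a"
      unfolding swapc_fix[OF xa ya] swapc_zero unfolding dyn_def by (simp add: blk_apply_zero)
  qed
  have invQ: "\<And>x y X. x \<noteq> a \<Longrightarrow> y \<noteq> a \<Longrightarrow> blk_quad (QQ t a) (swapc x y X) = blk_quad (QQ t a) X"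
  proof -
    fix x y and X :: "'p \<Rightarrow> real^'x" assume xa: "x \<noteq> a" and ya: "y \<noteq> a"
    have "swapc x y (c t X (\<lambda>_. 0::real^'u)) a = c t (swapc x y X) (swapc x y (\<lambda>_. 0)) a"
      using exch_cost by metis
    then show "blk_quad (QQ t a) (swapc x y X) = blk_quad (QQ t a) X"
      unfolding swapc_fix[OF xa ya] swapc_zero unfolding c_def by (simp add: blk_quad_zero)
  qed
  have invR: "\<And>x y U. x \<noteq> a \<Longrightarrow> y \<noteq> a \<Longrightarrow> blk_quad (RR t a) (swapc x y U) = blk_quad (RR t a) U"
  proof -
    fix x y and U :: "'p \<Rightarrow> real^'u" assume xa: "x \<noteq> a" and ya: "y \<noteq> a"
    have "swapc x y (c t (\<lambda>_. 0::real^'x) U) a = c t (swapc x y (\<lambda>_. 0)) (swapc x y U) a"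
      using exch_cost by metis
    then show "blk_quad (RR t a) (swapc x y U) = blk_quad (RR t a) U"
      unfolding swapc_fix[OF xa ya] swapc_zero unfolding c_def by (simp add: blk_quad_zero)
  qed
  obtain A Abar where HA: "\<And>Y. blk_apply (AA t) Y a = A *v Y a + Abar *v mean Y"
    using lin_struct[OF invA n2] by blast
  obtain B Bbar where HB: "\<And>Y. blk_apply (BB t) Y a = B *v Y a + Bbar *v mean Y"
    using lin_struct[OF invB n2] by blast
  obtain Q Sx Qbar Gx where HQ: "\<And>Y. blk_quad (QQ t a) Y =
     Y a \<bullet> (Q *v Y a) + 2 * (Y a \<bullet> (Sx *v mean Y)) + mean Y \<bullet> (Qbar *v mean Y)
     + (1 / real CARD('p)) * (\<Sum>j\<in>UNIV. Y j \<bullet> (Gx *v Y j))"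
    using quad_struct[OF invQ n2] by blast
  obtain R Su Rbar Gu where HR: "\<And>Y. blk_quad (RR t a) Y =
     Y a \<bullet> (R *v Y a) + 2 * (Y a \<bullet> (Su *v mean Y)) + mean Y \<bullet> (Rbar *v mean Y)
     + (1 / real CARD('p)) * (\<Sum>j\<in>UNIV. Y j \<bullet> (Gu *v Y j))"
    using quad_struct[OF invR n2] by blast
  show "(\<exists>(A::real^'x^'x) (B::real^'u^'x) (Abar::real^'x^'x) (Bbar::real^'u^'x).
             \<forall>X U W i. dyn t X U W i =
                 A *v X i + B *v U i + Abar *v mean X + Bbar *v mean U + W i)
          \<and> (\<exists>(Q::real^'x^'x) (R::real^'u^'u) (Sx::real^'x^'x) (Su::real^'u^'u)
               (Qbar::real^'x^'x) (Rbar::real^'u^'u) (Gx::real^'x^'x) (Gu::real^'u^'u).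
             \<forall>X U i. c t X U i =
                 X i \<bullet> (Q *v X i) + 2 * (X i \<bullet> (Sx *v mean X)) + mean X \<bullet> (Qbar *v mean X)
               + U i \<bullet> (R *v U i) + 2 * (U i \<bullet> (Su *v mean U)) + mean U \<bullet> (Rbar *v mean U)
               + (1 / real CARD('p)) * (\<Sum>j\<in>UNIV. X j \<bullet> (Gx *v X j) + U j \<bullet> (Gu *v U j)))"
  proof (intro conjI exI allI)
    fix X U W i
    have "dyn t X U W i = swapc a i (dyn t X U W) a" by (simp add: swapc_at)
    also have "\<dots> = dyn t (swapc a i X) (swapc a i U) (swapc a i W) a" using dsw by metis
    also have "\<dots> = A *v X i + B *v U i + Abar *v mean X + Bbar *v mean U + W i"
      unfolding dyn_def HA HB by (simp add: swapc_at mean_swapc algebra_simps)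
    finally show "dyn t X U W i = A *v X i + B *v U i + Abar *v mean X + Bbar *v mean U + W i" .
  next
    fix X U i
    have "c t X U i = swapc a i (c t X U) a" by (simp add: swapc_at)
    also have "\<dots> = c t (swapc a i X) (swapc a i U) a" using exch_cost by metis
    also have "\<dots> = X i \<bullet> (Q *v X i) + 2 * (X i \<bullet> (Sx *v mean X)) + mean X \<bullet> (Qbar *v mean X)
               + U i \<bullet> (R *v U i) + 2 * (U i \<bullet> (Su *v mean U)) + mean U \<bullet> (Rbar *v mean U)
               + (1 / real CARD('p)) * (\<Sum>j\<in>UNIV. X j \<bullet> (Gx *v X j) + U j \<bullet> (Gu *v U j))"
      unfolding c_def HQ HR
      using sum_swapc[of "\<lambda>v. v \<bullet> (Gx *v v)" a i X] sum_swapc[of "\<lambda>v. v \<bullet> (Gu *v v)" a i U]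
      by (simp add: swapc_at mean_swapc sum.distrib algebra_simps)
    finally show "c t X U i = X i \<bullet> (Q *v X i) + 2 * (X i \<bullet> (Sx *v mean X)) + mean X \<bullet> (Qbar *v mean X)
               + U i \<bullet> (R *v U i) + 2 * (U i \<bullet> (Su *v mean U)) + mean U \<bullet> (Rbar *v mean U)
               + (1 / real CARD('p)) * (\<Sum>j\<in>UNIV. X j \<bullet> (Gx *v X j) + U j \<bullet> (Gu *v U j))" .
  qed
qed

end
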